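(* Let $\pi\in\mathcal{S}_n$ be a Schröder permutation. Then for every $k\ge1$, $\pi$ avoids the pattern $12\cdots k$ if and only if $\phi(\pi)$ avoids $12\cdots k$.
   Context: A permutation avoids $\tau\in\mathcal{S}_k$ if no subsequence of length $k$ is in the same relative order as $\tau$; $12\cdots k$ is the increasing pattern of length $k$. A Schröder permutation is one avoiding both $1243$ and $2143$. Represent $\pi\in\mathcal{S}_n$ by an $n\times n$ array, rows $i$ numbered top to bottom, columns $j$ left to right, with a dot in square $(i,\pi_i)$. The diagram $D(\pi)$ is the set of squares $(i,j)$ with $\pi_i>j$ and $\pi^{-1}(j)>i$. The essential set $\mathcal{E}(\pi)$ is the set of $(i,j)\in D(\pi)$ with $(i+1,j)\notin D(\pi)$ and $(i,j+1)\notin D(\pi)$ (squares outside the array count as not in $D(\pi)$). The rank of $(i,j)$ with respect to $\pi$ is $\rho_\pi(i,j)=\#\{k<i:\pi_k<j\}$; $\mathcal{E}_r(\pi)$ is the set of elements of $\mathcal{E}(\pi)$ of rank $r$. A permutation is uniquely determined by its essential set together with the ranks of its elements (Fulton). For a Schröder permutation $\pi\in\mathcal{S}_n$, let $\mathcal{E}^*(\pi)$ be obtained from $\mathcal{E}(\pi)$ by replacing each $(i,j)\in\mathcal{E}_1(\pi)$ by $(i-1,j-1)$; there is a unique $\sigma\in\mathcal{S}_n$ with $\mathcal{E}(\sigma)=\mathcal{E}^*(\pi)$ and all elements of $\mathcal{E}(\sigma)$ of rank $0$ (with respect to $\sigma$), and $\phi(\pi):=\sigma$ (a $132$-avoiding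 permutation). *)

theory Defs
  imports "HOL-Combinatorics.Permutations"
begin

text \<open>Permutations of [n] = {1..n} are functions \<open>\<pi> :: nat \<Rightarrow> nat\<close> with \<open>\<pi> permutes {1..n}\<close>.
Patterns are given as lists of values (one-line notation), e.g. [1,2,4,3].\<close>

definition contains_pattern :: "nat \<Rightarrow> (nat \<Rightarrow> nat) \<Rightarrow> nat list \<Rightarrow> bool" where
  "contains_pattern n \<pi> \<tau> \<longleftrightarrow>
     (\<exists>f :: nat \<Rightarrow> nat.
        (\<forall>a b. a < b \<and> b < length \<tau> \<longrightarrow> f a < f b) \<and>
        (\<forall>a < length \<tau>. f a \<in> {1..n}) \<and>
        (\<forall>a < length \<tau>. \<forall>b < length \<tau>. (\<pi> (f a) < \<pi> (f b) \<longleftrightarrow> \<tau> ! a < \<tau> ! b)))"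

definition avoids :: "nat \<Rightarrow> (nat \<Rightarrow> nat) \<Rightarrow> nat list \<Rightarrow> bool" where
  "avoids n \<pi> \<tau> \<longleftrightarrow> \<not> contains_pattern n \<pi> \<tau>"

definition incr_pattern :: "nat \<Rightarrow> nat list" where
  "incr_pattern k = [1..<k+1]"

definition schroeder :: "nat \<Rightarrow> (nat \<Rightarrow> nat) \<Rightarrow> bool" where
  "schroeder n \<pi> \<longleftrightarrow> avoids n \<pi> [1,2,4,3] \<and> avoids n \<pi> [2,1,4,3]"

definition diagram :: "nat \<Rightarrow> (nat \<Rightarrow> nat) \<Rightarrow> (nat \<times> nat) set" where
  "diagram n \<pi> = {(i, j). i \<in> {1..n} \<and> j \<in> {1..n} \<and> \<pi> i > j \<and> inv \<pi> j > i}"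

definition essential_set :: "nat \<Rightarrow> (nat \<Rightarrow> nat) \<Rightarrow> (nat \<times> nat) set" where
  "essential_set n \<pi> = {(i, j) \<in> diagram n \<pi>.
      (i + 1, j) \<notin> diagram n \<pi> \<and> (i, j + 1) \<notin> diagram n \<pi>}"

definition rank :: "(nat \<Rightarrow> nat) \<Rightarrow> nat \<times> nat \<Rightarrow> nat" where
  "rank \<pi> ij = card {k. 1 \<le> k \<and> k < fst ij \<and> \<pi> k < snd ij}"

definition essential_star :: "nat \<Rightarrow> (nat \<Rightarrow> nat) \<Rightarrow> (nat \<times> nat) set" where
  "essential_star n \<pi> =
     {e \<in> essential_set n \<pi>. rank \<pi> e \<noteq> 1} \<union>
     {(i - 1, j - 1) | i j. (i, j) \<in> essential_set n \<pi> \<and> rank \<pi> (i, j) = 1}"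

definition phi :: "nat \<Rightarrow> (nat \<Rightarrow> nat) \<Rightarrow> (nat \<Rightarrow> nat)" where
  "phi n \<pi> = (THE \<sigma>. \<sigma> permutes {1..n} \<and> essential_set n \<sigma> = essential_star n \<pi> \<and>
                      (\<forall>e \<in> essential_set n \<sigma>. rank \<sigma> e = 0))"

end

theory Submission
  imports Defs
begin


lemma perm_in:
  fixes \<pi> :: "nat \<Rightarrow> nat"
  assumes "\<pi> permutes {1..n}" "x \<in> {1..n}" shows "\<pi> x \<in> {1..n}"
  using assms permutes_image by blast

lemma perm_inj:
  fixes \<pi> :: "nat \<Rightarrow> nat"
  assumes "\<pi> permutes {1..n}" "\<pi> x = \<pi> y" shows "x = y"
  using assms permutes_inj by (metis injD)

lemma inv_gt_iff:
  fixes \<pi> :: "nat \<Rightarrow> nat"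
  assumes p: "\<pi> permutes {1..n}" and j: "j \<in> {1..n}"
  shows "(inv \<pi> j > i) \<longleftrightarrow> (\<forall>k\<in>{1..i}. \<pi> k \<noteq> j)"
proof -
  have pj: "\<pi> (inv \<pi> j) = j" using p permutes_inverses(1) by metis
  have pin: "inv \<pi> j \<in> {1..n}" using perm_in[OF permutes_inv[OF p] j] .
  show ?thesis
  proof
    assume a: "inv \<pi> j > i"
    show "\<forall>k\<in>{1..i}. \<pi> k \<noteq> j"
    proof (intro ballI notI)
      fix k assume "k \<in> {1..i}" "\<pi> k = j"
      then have "k = inv \<pi> j" using pj perm_inj[OF p, of k "inv \<pi> j"] by simp
      then show False using a \<open>k \<in> {1..i}\<close> by auto
    qed
  next
    assume "\<forall>k\<in>{1..i}. \<pi> k \<noteq> j"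
    then show "inv \<pi> j > i" using pj pin by (metis atLeastAtMost_iff not_le)
  qed
qed

lemma diag_iff:
  fixes \<pi> :: "nat \<Rightarrow> nat"
  assumes p: "\<pi> permutes {1..n}"
  shows "(i,j) \<in> diagram n \<pi> \<longleftrightarrow> i \<in> {1..n} \<and> j \<in> {1..n} \<and> j < \<pi> i \<and> (\<forall>k\<in>{1..i}. \<pi> k \<noteq> j)"
  using inv_gt_iff[OF p] unfolding diagram_def by auto

definition incs :: "nat \<Rightarrow> (nat \<Rightarrow> nat) \<Rightarrow> nat \<Rightarrow> bool" where
  "incs n \<pi> k \<longleftrightarrow> (\<exists>S\<subseteq>{1..n}. card S = k \<and> (\<forall>a\<in>S. \<forall>b\<in>S. a < b \<longrightarrow> \<pi> a < \<pi> b))"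

lemma contains_incr_iff:
  "contains_pattern n \<pi> (incr_pattern k) \<longleftrightarrow> incs n \<pi> k"
proof
  assume "contains_pattern n \<pi> (incr_pattern k)"
  then obtain f where f1: "\<forall>a b. a < b \<and> b < k \<longrightarrow> f a < f b"
    and f2: "\<forall>a<k. f a \<in> {1..n}"
    and f3: "\<forall>a<k. \<forall>b<k. (\<pi> (f a) < \<pi> (f b) \<longleftrightarrow> a < b)"
    unfolding contains_pattern_def incr_pattern_def by (simp del: upt_Suc) blast
  have inj: "inj_on f {..<k}"
    by (rule inj_onI) (metis f1 lessThan_iff nat_neq_iff)
  show "incs n \<pi> k" unfolding incs_def
  proof (intro exI conjI)
    show "f ` {..<k} \<subseteq> {1..n}" using f2 by auto
    show "card (f ` {..<k}) = k" using card_image[OF inj] by simp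
    show "\<forall>a\<in>f ` {..<k}. \<forall>b\<in>f ` {..<k}. a < b \<longrightarrow> \<pi> a < \<pi> b"
      using f1 f3 by (metis imageE lessThan_iff nat_neq_iff order_less_asym)
  qed
next
  assume "incs n \<pi> k"
  then obtain S where S: "S \<subseteq> {1..n}" "card S = k" "\<forall>a\<in>S. \<forall>b\<in>S. a < b \<longrightarrow> \<pi> a < \<pi> b"
    unfolding incs_def by blast
  have fin: "finite S" using S(1) finite_subset by blast
  define xs where "xs = sorted_list_of_set S"
  have L: "length [1..<k+1] = k" by (simp only: length_upt)
  have len: "length xs = k" using S(2) xs_def by simp
  have st: "sorted_wrt (<) xs" using xs_def strict_sorted_list_of_set by blast
  have mem: "a < k \<Longrightarrow> xs ! a \<in> S" for a using len fin xs_def by (metis nth_mem set_sorted_list_of_set)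
  have lt: "a < b \<Longrightarrow> b < k \<Longrightarrow> xs ! a < xs ! b" for a b using st len sorted_wrt_nth_less by blast
  show "contains_pattern n \<pi> (incr_pattern k)"
    unfolding contains_pattern_def incr_pattern_def
  proof (intro exI[of _ "\<lambda>a. xs ! a"] conjI allI impI)
    fix a b assume "a < b \<and> b < length [1..<k+1]" then show "xs ! a < xs ! b" using lt by (simp del: upt_Suc)
  next
    fix a assume "a < length [1..<k+1]"
    then have "a < k" by (simp only: L)
    then show "xs ! a \<in> {1..n}" using mem S(1) by blast
  next
    fix a b assume a: "a < length [1..<k+1]" and b: "b < length [1..<k+1]"
    have "(\<pi> (xs ! a) < \<pi> (xs ! b)) = (a < b)"
      using a b lt mem S(3) by (simp del: upt_Suc) (metis nat_neq_iff order_less_asym)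
    then show "(\<pi> (xs ! a) < \<pi> (xs ! b)) = ([1..<k + 1] ! a < [1..<k + 1] ! b)"
      using a b by (simp del: upt_Suc)
  qed
qed

lemma incs_of_set:
  assumes "S \<subseteq> {1..n}" "k \<le> card S" "\<forall>a\<in>S. \<forall>b\<in>S. a < b \<longrightarrow> \<pi> a < \<pi> b"
  shows "incs n \<pi> k"
proof -
  obtain T where "T \<subseteq> S" "card T = k" using obtain_subset_with_card_n[OF assms(2)] by metis
  then show ?thesis unfolding incs_def using assms by (intro exI[of _ T]) blast
qed

lemma incs_mono: "incs n \<pi> k \<Longrightarrow> k' \<le> k \<Longrightarrow> incs n \<pi> k'"
  unfolding incs_def using incs_of_set incs_def by metis

lemma cnt_lemma:
  fixes \<pi> :: "nat \<Rightarrow> nat"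
  assumes p: "\<pi> permutes {1..n}" and "i \<le> n" "t \<le> n"
  shows "card {r\<in>{i+1..n}. t < \<pi> r} + i = n - t + card {r\<in>{1..i}. \<pi> r \<le> t}"
proof -
  have "\<pi> ` {r\<in>{1..n}. t < \<pi> r} = {t+1..n}"
  proof
    show "\<pi> ` {r\<in>{1..n}. t < \<pi> r} \<subseteq> {t+1..n}" using perm_in[OF p] by fastforce
    show "{t+1..n} \<subseteq> \<pi> ` {r\<in>{1..n}. t < \<pi> r}"
    proof
      fix y assume y: "y \<in> {t+1..n}"
      then have "y \<in> \<pi> ` {1..n}" using permutes_image[OF p] assms by auto
      then obtain r where "r \<in> {1..n}" "\<pi> r = y" by blast
      then show "y \<in> \<pi> ` {r\<in>{1..n}. t < \<pi> r}" using y by force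
    qed
  qed
  then have c1: "card {r\<in>{1..n}. t < \<pi> r} = n - t"
    using card_image[of \<pi>] permutes_inj[OF p] by (metis card_atLeastAtMost diff_Suc_Suc Suc_eq_plus1 inj_on_subset subset_UNIV)
  have "{r\<in>{1..n}. t < \<pi> r} = {r\<in>{1..i}. t < \<pi> r} \<union> {r\<in>{i+1..n}. t < \<pi> r}" using assms by auto
  moreover have "{r\<in>{1..i}. t < \<pi> r} \<inter> {r\<in>{i+1..n}. t < \<pi> r} = {}" by auto
  ultimately have c2: "card {r\<in>{1..n}. t < \<pi> r} = card {r\<in>{1..i}. t < \<pi> r} + card {r\<in>{i+1..n}. t < \<pi> r}"
    by (simp add: card_Un_disjoint)
  have "{1..i} = {r\<in>{1..i}. t < \<pi> r} \<union> {r\<in>{1..i}. \<pi> r \<le> t}" by auto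
  moreover have "{r\<in>{1..i}. t < \<pi> r} \<inter> {r\<in>{1..i}. \<pi> r \<le> t} = {}" by auto
  ultimately have c3: "i = card {r\<in>{1..i}. t < \<pi> r} + card {r\<in>{1..i}. \<pi> r \<le> t}"
    by (metis (no_types, lifting) card_Un_disjoint card_atLeastAtMost diff_Suc_1 finite_atLeastAtMost finite_Un)
  show ?thesis using c1 c2 c3 by linarith
qed

lemma cnt_bound:
  fixes \<pi> :: "nat \<Rightarrow> nat"
  assumes p: "\<pi> permutes {1..n}" and "i \<le> n" "t \<le> n"
    and "T \<subseteq> {i+1..n}" "\<forall>r\<in>T. t < \<pi> r"
  shows "card T + i \<le> n - t + card {r\<in>{1..i}. \<pi> r \<le> t}"
proof -
  have "card T \<le> card {r\<in>{i+1..n}. t < \<pi> r}" using assms(4,5) by (intro card_mono) auto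
  then show ?thesis using cnt_lemma[OF assms(1-3)] by linarith
qed


locale pm =
  fixes n :: nat and \<pi> :: "nat \<Rightarrow> nat"
  assumes perm: "\<pi> permutes {1..n}"
begin

definition m :: "nat \<Rightarrow> nat" where "m i = Min (\<pi> ` {1..i})"
definition s :: "nat \<Rightarrow> nat" where "s i = Min (\<pi> ` {1..i} - {m i})"

lemma inj: "\<pi> x = \<pi> y \<Longrightarrow> x = y" using perm_inj[OF perm] by blast

lemma pos: "1 \<le> k \<Longrightarrow> 1 \<le> \<pi> k"
  using perm_in[OF perm, of k] permutes_not_in[OF perm, of k] by (cases "k \<le> n") auto

lemma inrange: "k \<in> {1..n} \<Longrightarrow> \<pi> k \<in> {1..n}" using perm_in[OF perm] by blast

lemma m_mem: "1 \<le> i \<Longrightarrow> m i \<in> \<pi> ` {1..i}"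
  unfolding m_def by (rule Min_in) auto

lemma m_le: "k \<in> {1..i} \<Longrightarrow> m i \<le> \<pi> k"
  unfolding m_def by (rule Min_le) auto

lemma m_ex: assumes "1 \<le> i" obtains p where "p \<in> {1..i}" "\<pi> p = m i"
proof -
  from m_mem[OF assms] obtain p where "p \<in> {1..i}" "m i = \<pi> p" by (rule imageE)
  then show ?thesis using that by simp
qed

lemma m_pos: assumes "1 \<le> i" shows "1 \<le> m i"
proof -
  obtain p where p: "p \<in> {1..i}" "\<pi> p = m i" using m_ex[OF assms] by blast
  have "1 \<le> \<pi> p" using p(1) by (intro pos) simp
  then show ?thesis using p(2) by simp
qed

lemma m_len: assumes "1 \<le> i" "i \<le> n" shows "m i \<le> n"
proof -
  obtain p where p: "p \<in> {1..i}" "\<pi> p = m i" using m_ex[OF assms(1)] by blast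
  have "p \<in> {1..n}" using p(1) assms by simp
  then have "\<pi> p \<in> {1..n}" by (rule inrange)
  then show ?thesis using p(2) by simp
qed

lemma ne2: assumes "2 \<le> i" shows "\<pi> ` {1..i} - {m i} \<noteq> {}"
proof
  assume e: "\<pi> ` {1..i} - {m i} = {}"
  have a1: "(1::nat) \<in> {1..i}" and b1: "(2::nat) \<in> {1..i}" using assms by auto
  have a: "\<pi> 1 \<in> \<pi> ` {1..i}" using a1 by (rule imageI)
  have b: "\<pi> 2 \<in> \<pi> ` {1..i}" using b1 by (rule imageI)
  have "\<pi> 1 = m i" using a e by blast
  moreover have "\<pi> 2 = m i" using b e by blast
  ultimately have "\<pi> 1 = \<pi> 2" by simp
  then have "(1::nat) = 2" by (rule inj)
  then show False by simp
qed

lemma s_mem: assumes "2 \<le> i" shows "s i \<in> \<pi> ` {1..i}" "s i \<noteq> m i"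
proof -
  have "s i \<in> \<pi> ` {1..i} - {m i}" unfolding s_def using ne2[OF assms] by (intro Min_in) auto
  then show "s i \<in> \<pi> ` {1..i}" "s i \<noteq> m i" by auto
qed

lemma s_le: "2 \<le> i \<Longrightarrow> k \<in> {1..i} \<Longrightarrow> \<pi> k \<noteq> m i \<Longrightarrow> s i \<le> \<pi> k"
  unfolding s_def by (rule Min_le) auto

lemma s_ex: assumes "2 \<le> i" obtains q where "q \<in> {1..i}" "\<pi> q = s i"
proof -
  from s_mem(1)[OF assms] obtain q where "q \<in> {1..i}" "s i = \<pi> q" by (rule imageE)
  then show ?thesis using that by simp
qed

lemma m_lt_s: assumes "2 \<le> i" shows "m i < s i"
proof -
  obtain q where q: "q \<in> {1..i}" "\<pi> q = s i" using s_ex[OF assms] by blast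
  have "m i \<le> s i" using m_le[OF q(1)] q(2) by simp
  then show ?thesis using s_mem(2)[OF assms] by simp
qed

lemma s_len: assumes "2 \<le> i" "i \<le> n" shows "s i \<le> n"
proof -
  obtain q where "q \<in> {1..i}" "\<pi> q = s i" using s_ex[OF assms(1)] by blast
  then show ?thesis using inrange[of q] assms by simp
qed

lemma cnt_m: assumes "1 \<le> i" shows "card {r\<in>{1..i}. \<pi> r \<le> m i} = 1"
proof -
  obtain p where p: "p \<in> {1..i}" "\<pi> p = m i" using m_ex[OF assms] by blast
  have "{r\<in>{1..i}. \<pi> r \<le> m i} = {p}"
  proof
    show "{r\<in>{1..i}. \<pi> r \<le> m i} \<subseteq> {p}"
    proof
      fix r assume r: "r \<in> {r\<in>{1..i}. \<pi> r \<le> m i}"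
      then have "\<pi> r = \<pi> p" using m_le[of r i] p by simp
      then have "r = p" by (rule inj)
      then show "r \<in> {p}" by simp
    qed
    show "{p} \<subseteq> {r\<in>{1..i}. \<pi> r \<le> m i}" using p by simp
  qed
  then show ?thesis by simp
qed

lemma cnt_s: assumes "2 \<le> i" shows "card {r\<in>{1..i}. \<pi> r \<le> s i} = 2"
proof -
  obtain p where p: "p \<in> {1..i}" "\<pi> p = m i" using m_ex[of i] assms by (metis le_trans one_le_numeral)
  obtain q where q: "q \<in> {1..i}" "\<pi> q = s i" using s_mem[OF assms] by auto
  have pq: "p \<noteq> q" using p q s_mem[OF assms] by auto
  have "{r\<in>{1..i}. \<pi> r \<le> s i} = {p, q}"
  proof
    show "{r\<in>{1..i}. \<pi> r \<le> s i} \<subseteq> {p, q}"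
    proof
      fix r assume r: "r \<in> {r\<in>{1..i}. \<pi> r \<le> s i}"
      show "r \<in> {p, q}"
      proof (cases "\<pi> r = m i")
        case True then show ?thesis using p inj by auto
      next
        case False
        then have "s i \<le> \<pi> r" using s_le[OF assms] r by auto
        then have "\<pi> r = \<pi> q" using r q by auto
        then show ?thesis using inj by auto
      qed
    qed
    show "{p, q} \<subseteq> {r\<in>{1..i}. \<pi> r \<le> s i}" using p q m_lt_s[OF assms] by auto
  qed
  then show ?thesis using pq by simp
qed

lemma m_bound: assumes "1 \<le> i" "i \<le> n" shows "m i + i \<le> n + 1"
proof -
  have sub: "\<pi> ` {1..i} \<subseteq> {m i..n}"
  proof
    fix y assume "y \<in> \<pi> ` {1..i}"
    then obtain k where k: "k \<in> {1..i}" "y = \<pi> k" by blast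
    then show "y \<in> {m i..n}" using m_le[OF k(1)] inrange[of k] assms by simp
  qed
  have "card (\<pi> ` {1..i}) = i" using card_image[of \<pi> "{1..i}"] inj by (simp add: inj_on_def)
  then have "i \<le> card {m i..n}" using card_mono[OF _ sub] by simp
  moreover have "m i \<le> n" using m_len assms by simp
  ultimately show ?thesis by simp
qed

lemma s_bound: assumes "2 \<le> i" "i \<le> n" shows "s i + i \<le> n + 2"
proof -
  obtain p where p: "p \<in> {1..i}" "\<pi> p = m i" using m_ex[of i] assms by (metis le_trans one_le_numeral)
  have sub: "\<pi> ` ({1..i} - {p}) \<subseteq> {s i..n}"
  proof
    fix y assume "y \<in> \<pi> ` ({1..i} - {p})"
    then obtain k where k: "k \<in> {1..i}" "k \<noteq> p" "y = \<pi> k" by blast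
    have "\<pi> k \<noteq> m i"
    proof
      assume "\<pi> k = m i"
      then have "\<pi> k = \<pi> p" using p by simp
      then have "k = p" by (rule inj)
      then show False using k by simp
    qed
    then show "y \<in> {s i..n}" using s_le[OF assms(1) k(1)] k inrange[of k] assms by simp
  qed
  have ij: "inj_on \<pi> ({1..i} - {p})" using inj by (auto simp: inj_on_def)
  have "card (\<pi> ` ({1..i} - {p})) = i - 1" using card_image[OF ij] p by simp
  then have "i - 1 \<le> card {s i..n}" using card_mono[OF _ sub] by simp
  moreover have "s i \<le> n" using s_len assms by simp
  ultimately show ?thesis by simp
qed

lemma img_Suc: "\<pi> ` {1..Suc i} = insert (\<pi> (Suc i)) (\<pi> ` {1..i})"
  by (auto simp: atLeastAtMostSuc_conv)

lemma notin_prefix: "\<pi> (Suc i) \<notin> \<pi> ` {1..i}"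
proof
  assume "\<pi> (Suc i) \<in> \<pi> ` {1..i}"
  then obtain k where k: "k \<in> {1..i}" "\<pi> (Suc i) = \<pi> k" by blast
  from k(2) have "Suc i = k" by (rule inj)
  then show False using k by simp
qed

lemma m_Suc: assumes "1 \<le> i" shows "m (Suc i) = min (\<pi> (Suc i)) (m i)"
  unfolding m_def img_Suc using assms by (subst Min_insert) auto

lemma s_Suc_lt: assumes "1 \<le> i" "\<pi> (Suc i) < m i" shows "s (Suc i) = m i" "m (Suc i) = \<pi> (Suc i)"
proof -
  show m1: "m (Suc i) = \<pi> (Suc i)" using m_Suc assms by simp
  have "\<pi> ` {1..Suc i} - {m (Suc i)} = \<pi> ` {1..i}" unfolding img_Suc m1 using notin_prefix by auto
  then show "s (Suc i) = m i" unfolding s_def m_def by simp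
qed

lemma s_Suc_gt: assumes "1 \<le> i" "\<pi> (Suc i) > m i"
  shows "m (Suc i) = m i" "s (Suc i) = (if i = 1 then \<pi> (Suc i) else min (\<pi> (Suc i)) (s i))"
proof -
  show m1: "m (Suc i) = m i" using m_Suc assms by simp
  have e: "\<pi> ` {1..Suc i} - {m (Suc i)} = insert (\<pi> (Suc i)) (\<pi> ` {1..i} - {m i})"
    unfolding img_Suc m1 using assms by auto
  show "s (Suc i) = (if i = 1 then \<pi> (Suc i) else min (\<pi> (Suc i)) (s i))"
  proof (cases "i = 1")
    case True
    then have "\<pi> ` {1..i} - {m i} = {}" unfolding m_def by auto
    then show ?thesis unfolding s_def e using True by simp
  next
    case False
    then have "\<pi> ` {1..i} - {m i} \<noteq> {}" using ne2 assms by simp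
    then show ?thesis unfolding s_def e using False by (subst Min_insert) (auto simp: s_def)
  qed
qed

lemma ne_m: assumes "1 \<le> i" shows "\<pi> (Suc i) \<noteq> m i"
proof
  assume "\<pi> (Suc i) = m i"
  then have "\<pi> (Suc i) \<in> \<pi> ` {1..i}" using m_mem[OF assms] by simp
  then show False using notin_prefix by blast
qed

lemma s_mono: assumes "2 \<le> i" shows "s (Suc i) \<le> s i"
proof (cases "\<pi> (Suc i) < m i")
  case True
  have "s (Suc i) = m i" using s_Suc_lt(1)[of i] True assms by simp
  then show ?thesis using m_lt_s[OF assms] by simp
next
  case False
  have "\<pi> (Suc i) \<noteq> m i" using ne_m assms by simp
  then have "\<pi> (Suc i) > m i" using False by linarith
  then show ?thesis using s_Suc_gt(2)[of i] assms by simp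
qed

lemma s_step: assumes "2 \<le> i" shows "s (Suc i) < s i \<longleftrightarrow> \<pi> (Suc i) < s i"
proof (cases "\<pi> (Suc i) < m i")
  case True
  have "s (Suc i) = m i" using s_Suc_lt(1)[of i] True assms by simp
  then show ?thesis using m_lt_s[OF assms] True by simp
next
  case False
  have "\<pi> (Suc i) \<noteq> m i" using ne_m assms by simp
  then have "\<pi> (Suc i) > m i" using False by linarith
  then show ?thesis using s_Suc_gt assms by auto
qed

lemma m_n: assumes "1 \<le> n" shows "m n = 1"
proof -
  have "\<pi> ` {1..n} = {1..n}" using permutes_image[OF perm] .
  then show ?thesis unfolding m_def using assms by (simp, intro Min_eqI) auto
qed

lemma s_n: assumes "2 \<le> n" shows "s n = 2"
proof -
  have "\<pi> ` {1..n} = {1..n}" using permutes_image[OF perm] .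
  moreover have "m n = 1" using m_n assms by simp
  moreover have "{1..n} - {1::nat} = {2..n}" by auto
  ultimately show ?thesis unfolding s_def using assms by (simp, intro Min_eqI) auto
qed

end


lemma less4: "(x::nat) < 4 \<longleftrightarrow> x = 0 \<or> x = 1 \<or> x = 2 \<or> x = 3" by auto
lemma less3: "(x::nat) < 3 \<longleftrightarrow> x = 0 \<or> x = 1 \<or> x = 2" by auto
lemma less2: "(x::nat) < 2 \<longleftrightarrow> x = 0 \<or> x = 1" by auto

lemma pat4:
  fixes \<pi> :: "nat \<Rightarrow> nat"
  assumes "1 \<le> a" "a < b" "b < q" "q < r" "r \<le> n"
    and "\<forall>x<4. \<forall>y<4. (\<pi> ([a,b,q,r] ! x) < \<pi> ([a,b,q,r] ! y) \<longleftrightarrow> \<tau> ! x < \<tau> ! y)"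
    and "length \<tau> = 4"
  shows "contains_pattern n \<pi> \<tau>"
  unfolding contains_pattern_def
proof (intro exI[of _ "\<lambda>x. [a,b,q,r] ! x"] conjI allI impI)
  fix x y assume "x < y \<and> y < length \<tau>"
  then show "[a,b,q,r] ! x < [a,b,q,r] ! y" using assms(2-4) assms(7) unfolding less4
    by (auto simp: less4 less3 less2)
next
  fix x assume "x < length \<tau>"
  then show "[a,b,q,r] ! x \<in> {1..n}" using assms(1-5,7) by (auto simp: less4)
next
  fix x y assume "x < length \<tau>" "y < length \<tau>"
  then show "(\<pi> ([a,b,q,r] ! x) < \<pi> ([a,b,q,r] ! y)) = (\<tau> ! x < \<tau> ! y)"
    using assms(6,7) by auto
qed


context pm begin

lemma D_iff: "(i,j) \<in> diagram n \<pi> \<longleftrightarrow> i \<in> {1..n} \<and> j \<in> {1..n} \<and> j < \<pi> i \<and> (\<forall>k\<in>{1..i}. \<pi> k \<noteq> j)"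
  using diag_iff[OF perm] .

lemma ess_iff: "(i,j) \<in> essential_set n \<pi> \<longleftrightarrow> (i,j) \<in> diagram n \<pi> \<and> (Suc i, j) \<notin> diagram n \<pi> \<and> (i, Suc j) \<notin> diagram n \<pi>"
  unfolding essential_set_def by auto

lemma rank0_iff: "rank \<pi> (i,j) = 0 \<longleftrightarrow> (\<forall>k. 1 \<le> k \<and> k < i \<longrightarrow> j \<le> \<pi> k)"
proof -
  have "finite {k. 1 \<le> k \<and> k < i \<and> \<pi> k < j}" by (rule finite_subset[of _ "{..<i}"]) auto
  then show ?thesis unfolding rank_def by auto
qed

lemma rank1_iff: "rank \<pi> (i,j) = 1 \<longleftrightarrow> (\<exists>k0. 1 \<le> k0 \<and> k0 < i \<and> \<pi> k0 < j \<and> (\<forall>k. 1 \<le> k \<and> k < i \<and> \<pi> k < j \<longrightarrow> k = k0))"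
proof -
  have "rank \<pi> (i,j) = 1 \<longleftrightarrow> (\<exists>x. {k. 1 \<le> k \<and> k < i \<and> \<pi> k < j} = {x})"
    unfolding rank_def using card_1_singleton_iff by (simp add: card_1_singleton_iff)
  also have "\<dots> \<longleftrightarrow> (\<exists>k0. 1 \<le> k0 \<and> k0 < i \<and> \<pi> k0 < j \<and> (\<forall>k. 1 \<le> k \<and> k < i \<and> \<pi> k < j \<longrightarrow> k = k0))"
    by (auto; blast)
  finally show ?thesis .
qed

lemma ex_prefix_Suc:
  assumes "(i, Suc j) \<notin> diagram n \<pi>" "i \<in> {1..n}" "Suc j \<le> n" "j < \<pi> i"
  shows "\<exists>k\<in>{1..i}. \<pi> k = Suc j"
proof (rule ccontr)
  assume "\<not> ?thesis"
  moreover have "Suc j \<noteq> \<pi> i" using calculation assms(2) by auto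
  ultimately show False using assms D_iff by auto
qed

lemma below_Suc:
  assumes "(Suc i, j) \<notin> diagram n \<pi>" "Suc i \<le> n" "j \<in> {1..n}" "\<forall>k\<in>{1..i}. \<pi> k \<noteq> j"
  shows "\<pi> (Suc i) \<le> j"
proof (rule ccontr)
  assume a: "\<not> \<pi> (Suc i) \<le> j"
  have "\<forall>k\<in>{1..Suc i}. \<pi> k \<noteq> j" using assms(4) a by (auto simp: atLeastAtMostSuc_conv)
  then show False using assms a D_iff by auto
qed

lemma E0_iff:
  "((i,j) \<in> essential_set n \<pi> \<and> rank \<pi> (i,j) = 0) \<longleftrightarrow>
   (1 \<le> i \<and> i < n \<and> j = m i - 1 \<and> 2 \<le> m i \<and> \<pi> (Suc i) < m i)"
proof
  assume a: "(i,j) \<in> essential_set n \<pi> \<and> rank \<pi> (i,j) = 0"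
  then have D: "(i,j) \<in> diagram n \<pi>" and D1: "(Suc i, j) \<notin> diagram n \<pi>" and D2: "(i, Suc j) \<notin> diagram n \<pi>"
    using ess_iff by auto
  from D have i: "i \<in> {1..n}" and j: "j \<in> {1..n}" and ji: "j < \<pi> i" and nj: "\<forall>k\<in>{1..i}. \<pi> k \<noteq> j"
    using D_iff by auto
  have r: "\<forall>k. 1 \<le> k \<and> k < i \<longrightarrow> j \<le> \<pi> k" using a rank0_iff by blast
  have gt: "\<forall>k\<in>{1..i}. j < \<pi> k"
  proof
    fix k assume k: "k \<in> {1..i}"
    show "j < \<pi> k"
    proof (cases "k = i")
      case True then show ?thesis using ji by simp
    next
      case False then show ?thesis using k r nj by (metis atLeastAtMost_iff le_neq_implies_less)
    qed
  qed
  have jm: "j < m i" using m_mem[of i] i gt by auto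
  have mn: "m i \<le> n" using m_mem[of i] i inrange by fastforce
  obtain k where k: "k \<in> {1..i}" "\<pi> k = Suc j" using ex_prefix_Suc[OF D2 i] jm mn ji by auto
  have "m i \<le> Suc j" using m_le[OF k(1)] k(2) by simp
  then have mj: "m i = Suc j" using jm by simp
  have "i \<noteq> n" using m_n jm i j by auto
  then have "i < n" using i by simp
  moreover have "\<pi> (Suc i) \<le> j" using below_Suc[OF D1 _ j nj] \<open>i < n\<close> by simp
  ultimately show "1 \<le> i \<and> i < n \<and> j = m i - 1 \<and> 2 \<le> m i \<and> \<pi> (Suc i) < m i"
    using i j mj by auto
next
  assume a: "1 \<le> i \<and> i < n \<and> j = m i - 1 \<and> 2 \<le> m i \<and> \<pi> (Suc i) < m i"
  then have i1: "1 \<le> i" and inn: "i < n" and jd: "j = m i - 1" and m2: "2 \<le> m i"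
    and pm: "\<pi> (Suc i) < m i" by auto
  have js: "Suc j = m i" and j1: "1 \<le> j" using jd m2 by linarith+
  obtain p where p: "p \<in> {1..i}" "\<pi> p = m i" using m_ex[OF i1] by blast
  have mn: "m i \<le> n" using m_len i1 inn by simp
  have gt: "\<forall>k\<in>{1..i}. j < \<pi> k"
  proof
    fix k assume "k \<in> {1..i}"
    then have "m i \<le> \<pi> k" by (rule m_le)
    then show "j < \<pi> k" using js by simp
  qed
  have D: "(i,j) \<in> diagram n \<pi>"
  proof -
    have "i \<in> {1..n}" using i1 inn by simp
    moreover have "j \<in> {1..n}" using j1 js mn by simp
    moreover have "j < \<pi> i" using gt i1 by simp
    moreover have "\<forall>k\<in>{1..i}. \<pi> k \<noteq> j" using gt by (metis less_irrefl)
    ultimately show ?thesis unfolding D_iff by blast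
  qed
  have D1: "(Suc i, j) \<notin> diagram n \<pi>" unfolding D_iff using pm js by simp
  have D2: "(i, Suc j) \<notin> diagram n \<pi>" unfolding D_iff using p js by auto
  have "rank \<pi> (i,j) = 0" unfolding rank0_iff
  proof (intro allI impI)
    fix k assume "1 \<le> k \<and> k < i"
    then have "k \<in> {1..i}" by simp
    then show "j \<le> \<pi> k" using gt by (simp add: less_imp_le)
  qed
  then show "(i,j) \<in> essential_set n \<pi> \<and> rank \<pi> (i,j) = 0" using D D1 D2 ess_iff by blast
qed

lemma E1_iff:
  "((i,j) \<in> essential_set n \<pi> \<and> rank \<pi> (i,j) = 1) \<longleftrightarrow>
   (2 \<le> i \<and> i < n \<and> j = s i - 1 \<and> \<pi> i \<noteq> m i \<and> m i + 1 < s i \<and> \<pi> (Suc i) < s i)"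
proof
  assume a: "(i,j) \<in> essential_set n \<pi> \<and> rank \<pi> (i,j) = 1"
  then have D: "(i,j) \<in> diagram n \<pi>" and D1: "(Suc i, j) \<notin> diagram n \<pi>" and D2: "(i, Suc j) \<notin> diagram n \<pi>"
    using ess_iff by auto
  from D have i: "i \<in> {1..n}" and j: "j \<in> {1..n}" and ji: "j < \<pi> i" and nj: "\<forall>k\<in>{1..i}. \<pi> k \<noteq> j"
    using D_iff by auto
  obtain k0 where k0: "1 \<le> k0" "k0 < i" "\<pi> k0 < j" and hk: "\<forall>k. 1 \<le> k \<and> k < i \<and> \<pi> k < j \<longrightarrow> k = k0"
    using a rank1_iff by blast
  have i2: "2 \<le> i" using k0 by simp
  have gt: "\<forall>k\<in>{1..i}. k \<noteq> k0 \<longrightarrow> j < \<pi> k"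
  proof (intro ballI impI)
    fix k assume k: "k \<in> {1..i}" "k \<noteq> k0"
    show "j < \<pi> k"
    proof (cases "k = i")
      case True then show ?thesis using ji by simp
    next
      case False then show ?thesis using k hk nj by (metis atLeastAtMost_iff le_neq_implies_less not_le)
    qed
  qed
  have k0i: "k0 \<in> {1..i}" using k0 by simp
  have mk: "m i = \<pi> k0"
  proof -
    obtain p where p: "p \<in> {1..i}" "\<pi> p = m i" using m_mem i by force
    have "p = k0" using gt p m_le[OF k0i] k0(3) by (metis leD less_trans)
    then show ?thesis using p by simp
  qed
  have pim: "\<pi> i \<noteq> m i" using mk ji k0 by simp
  have sj: "j < s i"
  proof -
    obtain q where q: "q \<in> {1..i}" "\<pi> q = s i" using s_mem[OF i2] by force
    have "q \<noteq> k0" using q mk s_mem[OF i2] by auto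
    then show ?thesis using gt q by auto
  qed
  have sn: "s i \<le> n" using s_mem[OF i2] i inrange by fastforce
  obtain k where k: "k \<in> {1..i}" "\<pi> k = Suc j" using ex_prefix_Suc[OF D2 i] sj sn ji by auto
  have "\<pi> k \<noteq> m i" using k mk k0 by simp
  then have "s i \<le> Suc j" using s_le[OF i2 k(1)] k(2) by simp
  then have sj': "s i = Suc j" using sj by simp
  have "i \<noteq> n"
  proof
    assume "i = n"
    then have "s i = 2" using s_n i2 by simp
    then show False using sj' k0 pos[of k0] by simp
  qed
  then have "i < n" using i by simp
  moreover have "\<pi> (Suc i) \<le> j" using below_Suc[OF D1 _ j nj] \<open>i < n\<close> by simp
  ultimately show "2 \<le> i \<and> i < n \<and> j = s i - 1 \<and> \<pi> i \<noteq> m i \<and> m i + 1 < s i \<and> \<pi> (Suc i) < s i"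
    using i2 sj' pim mk k0 by auto
next
  assume a: "2 \<le> i \<and> i < n \<and> j = s i - 1 \<and> \<pi> i \<noteq> m i \<and> m i + 1 < s i \<and> \<pi> (Suc i) < s i"
  then have i2: "2 \<le> i" and inn: "i < n" and pim: "\<pi> i \<noteq> m i" and ps: "\<pi> (Suc i) < s i"
    and ms: "m i + 1 < s i" and jd: "j = s i - 1" by auto
  have i1: "1 \<le> i" using i2 by simp
  have mj: "m i < j" and js: "Suc j = s i" using ms jd by linarith+
  obtain p where p: "p \<in> {1..i}" "\<pi> p = m i" using m_ex[OF i1] by blast
  have pi: "p \<noteq> i" using p pim by auto
  have sn: "s i \<le> n" using s_len[OF i2] inn by simp
  have mpos: "1 \<le> m i" using m_pos i1 by simp
  have nj: "\<forall>k\<in>{1..i}. \<pi> k \<noteq> j"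
  proof
    fix k assume k: "k \<in> {1..i}"
    show "\<pi> k \<noteq> j"
    proof (cases "\<pi> k = m i")
      case True then show ?thesis using mj by simp
    next
      case False then show ?thesis using s_le[OF i2 k] js by simp
    qed
  qed
  have ji: "j < \<pi> i" using s_le[OF i2, of i] pim i1 js by simp
  have D: "(i,j) \<in> diagram n \<pi>" unfolding D_iff using i1 inn sn mpos mj js nj ji by auto
  have D1: "(Suc i, j) \<notin> diagram n \<pi>" unfolding D_iff using ps js by auto
  have D2: "(i, Suc j) \<notin> diagram n \<pi>" unfolding D_iff using js s_mem(1)[OF i2] by auto
  have "rank \<pi> (i,j) = 1" unfolding rank1_iff
  proof (intro exI[of _ p] conjI allI impI)
    show "1 \<le> p" using p by simp
    show "p < i" using p pi by simp
    show "\<pi> p < j" using p mj by simp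
    fix k assume k: "1 \<le> k \<and> k < i \<and> \<pi> k < j"
    have "\<pi> k = m i"
    proof (rule ccontr)
      assume "\<pi> k \<noteq> m i"
      then have "s i \<le> \<pi> k" using s_le[OF i2, of k] k by simp
      then show False using k js by simp
    qed
    then have "\<pi> k = \<pi> p" using p by simp
    then show "k = p" by (rule inj)
  qed
  then show "(i,j) \<in> essential_set n \<pi> \<and> rank \<pi> (i,j) = 1" using D D1 D2 ess_iff by blast
qed

end

locale spm = pm +
  assumes sch: "schroeder n \<pi>"
begin

lemma schr:
  assumes "1 \<le> a" "a < b" "b < q" "q < r" "r \<le> n" "\<pi> a < \<pi> r" "\<pi> b < \<pi> r"
  shows "\<pi> q < \<pi> r"
proof (rule ccontr)
  assume "\<not> \<pi> q < \<pi> r"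
  moreover have "\<pi> q \<noteq> \<pi> r" using inj assms by auto
  ultimately have qr: "\<pi> r < \<pi> q" by simp
  have ab: "\<pi> a \<noteq> \<pi> b" using inj assms by auto
  show False
  proof (cases "\<pi> a < \<pi> b")
    case True
    have "contains_pattern n \<pi> [1,2,4,3]"
      by (rule pat4[OF assms(1-5)]) (use True qr assms(6,7) in \<open>auto simp: less4\<close>)
    then show False using sch unfolding schroeder_def avoids_def by blast
  next
    case False
    then have "\<pi> b < \<pi> a" using ab by simp
    have "contains_pattern n \<pi> [2,1,4,3]"
      by (rule pat4[OF assms(1-5)]) (use \<open>\<pi> b < \<pi> a\<close> qr assms(6,7) in \<open>auto simp: less4\<close>)
    then show False using sch unfolding schroeder_def avoids_def by blast
  qed
qed

lemma rank_le1:
  assumes D: "(i,j) \<in> diagram n \<pi>" shows "rank \<pi> (i,j) \<le> 1"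
proof -
  let ?R = "{k. 1 \<le> k \<and> k < i \<and> \<pi> k < j}"
  have fin: "finite ?R" by (rule finite_subset[of _ "{..<i}"]) auto
  from D have i: "i \<in> {1..n}" and j: "j \<in> {1..n}" and ji: "j < \<pi> i" and nj: "\<forall>k\<in>{1..i}. \<pi> k \<noteq> j"
    using D_iff by auto
  have "j \<in> \<pi> ` {1..n}" using j permutes_image[OF perm] by simp
  then obtain r where r1: "r \<in> {1..n}" and r2: "j = \<pi> r" by (rule imageE)
  have ri: "i < r"
  proof (rule ccontr)
    assume "\<not> i < r"
    then have "r \<in> {1..i}" using r1 by simp
    then show False using nj r2 by blast
  qed
  have key: False if "x < y" "x \<in> ?R" "y \<in> ?R" for x y
  proof -
    have "\<pi> i < \<pi> r"
      by (rule schr) (use that r1 ri r2 in auto)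
    then show False using ji r2 by simp
  qed
  have "\<forall>x\<in>?R. \<forall>y\<in>?R. x = y"
  proof (intro ballI)
    fix x y assume x: "x \<in> ?R" and y: "y \<in> ?R"
    show "x = y"
    proof (rule linorder_cases[of x y])
      assume "x < y" then show ?thesis using key x y by blast
    next
      assume "y < x" then show ?thesis using key x y by blast
    qed
  qed
  then have "card ?R \<le> Suc 0" using card_le_Suc0_iff_eq[OF fin] by blast
  then show ?thesis unfolding rank_def by simp
qed

lemma Estar_iff:
  "(a,b) \<in> essential_star n \<pi> \<longleftrightarrow>
    (1 \<le> a \<and> a < n \<and> b = m a - 1 \<and> 2 \<le> m a \<and> \<pi> (Suc a) < m a) \<or>
    (1 \<le> a \<and> Suc a < n \<and> b = s (Suc a) - 2 \<and> \<pi> (Suc a) \<noteq> m (Suc a) \<and> m (Suc a) + 1 < s (Suc a)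
       \<and> \<pi> (Suc (Suc a)) < s (Suc a))"
proof -
  have A: "(a,b) \<in> {e \<in> essential_set n \<pi>. rank \<pi> e \<noteq> 1} \<longleftrightarrow>
      (1 \<le> a \<and> a < n \<and> b = m a - 1 \<and> 2 \<le> m a \<and> \<pi> (Suc a) < m a)"
  proof -
    have "(a,b) \<in> essential_set n \<pi> \<Longrightarrow> rank \<pi> (a,b) \<le> 1" using rank_le1 ess_iff by blast
    then have "(a,b) \<in> {e \<in> essential_set n \<pi>. rank \<pi> e \<noteq> 1} \<longleftrightarrow> (a,b) \<in> essential_set n \<pi> \<and> rank \<pi> (a,b) = 0"
      by auto
    then show ?thesis using E0_iff by simp
  qed
  have B: "(a,b) \<in> {(i - 1, j - 1) | i j. (i, j) \<in> essential_set n \<pi> \<and> rank \<pi> (i, j) = 1} \<longleftrightarrow>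
    (1 \<le> a \<and> Suc a < n \<and> b = s (Suc a) - 2 \<and> \<pi> (Suc a) \<noteq> m (Suc a) \<and> m (Suc a) + 1 < s (Suc a)
       \<and> \<pi> (Suc (Suc a)) < s (Suc a))" (is "?L \<longleftrightarrow> ?R")
  proof
    assume ?L
    then obtain i j where ij: "a = i - 1" "b = j - 1" "(i, j) \<in> essential_set n \<pi> \<and> rank \<pi> (i, j) = 1" by blast
    then have c: "2 \<le> i \<and> i < n \<and> j = s i - 1 \<and> \<pi> i \<noteq> m i \<and> m i + 1 < s i \<and> \<pi> (Suc i) < s i"
      using E1_iff by blast
    then have "i = Suc a" using ij by simp
    then show ?R using c ij by auto
  next
    assume r: ?R
    then have "(Suc a, s (Suc a) - 1) \<in> essential_set n \<pi> \<and> rank \<pi> (Suc a, s (Suc a) - 1) = 1"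
      using E1_iff by auto
    moreover have "a = Suc a - 1" "b = (s (Suc a) - 1) - 1" using r by auto
    ultimately show ?L by blast
  qed
  show ?thesis unfolding essential_star_def using A B by blast
qed

end


context pm begin

definition M :: "nat \<Rightarrow> nat" where "M i = (if i < n then max (m i) (s (Suc i) - 1) else 1)"
definition lam :: "nat \<Rightarrow> nat" where "lam i = M i - 1"

lemma M_pos: assumes "1 \<le> i" shows "1 \<le> M i"
  using m_pos[OF assms] unfolding M_def by auto

lemma M_mono: assumes "1 \<le> i" "Suc i \<le> n" shows "M (Suc i) \<le> M i"
proof (cases "Suc i < n")
  case True
  have i2: "2 \<le> Suc i" using assms by simp
  have "m (Suc i) \<le> m i" using m_Suc[OF assms(1)] by simp
  moreover have "s (Suc (Suc i)) \<le> s (Suc i)" using s_mono[OF i2] .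
  ultimately show ?thesis unfolding M_def using True by auto
next
  case False
  then have "M (Suc i) = 1" unfolding M_def using assms by simp
  then show ?thesis using M_pos[OF assms(1)] by simp
qed

lemma M_bound: assumes "1 \<le> i" "i \<le> n" shows "M i + i \<le> n + 1"
proof (cases "i < n")
  case True
  have a: "m i + i \<le> n + 1" using m_bound assms by simp
  have b: "s (Suc i) + Suc i \<le> n + 2" using s_bound[of "Suc i"] True assms by simp
  show ?thesis unfolding M_def using True a b by auto
next
  case False then show ?thesis unfolding M_def using assms by simp
qed

lemma lam_mono: "1 \<le> i \<Longrightarrow> Suc i \<le> n \<Longrightarrow> lam (Suc i) \<le> lam i"
  unfolding lam_def using M_mono by (simp add: diff_le_mono)

lemma lam_bound: "1 \<le> i \<Longrightarrow> i \<le> n \<Longrightarrow> lam i + i \<le> n"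
  unfolding lam_def using M_bound M_pos by fastforce

end

context spm begin

lemma corner_iff:
  "(1 \<le> a \<and> a \<le> n \<and> 1 \<le> b \<and> b \<le> lam a \<and> \<not> (Suc a \<le> n \<and> b \<le> lam (Suc a)) \<and> \<not> Suc b \<le> lam a)
   \<longleftrightarrow> (a,b) \<in> essential_star n \<pi>" (is "?L \<longleftrightarrow> ?R")
proof (cases "1 \<le> a \<and> a < n")
  case False
  have "\<not> ?L"
  proof
    assume L: ?L
    then have "a = n" using False by simp
    then have "lam a = 0" unfolding lam_def M_def by simp
    then show False using L by simp
  qed
  moreover have "\<not> ?R" unfolding Estar_iff using False by auto
  ultimately show ?thesis by blast
next
  case True
  then have a1: "1 \<le> a" and an: "a < n" by auto
  have LL: "?L \<longleftrightarrow> (1 \<le> b \<and> b = lam a \<and> lam (Suc a) < b)"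
    using a1 an by auto
  have Mpos1: "1 \<le> M (Suc a)" using M_pos by simp
  have mpos: "1 \<le> m a" using m_pos a1 by simp
  show ?thesis
  proof (cases "\<pi> (Suc a) < m a")
    case True
    have sS: "s (Suc a) = m a" and mS: "m (Suc a) = \<pi> (Suc a)" using s_Suc_lt[OF a1 True] by auto
    have Ma: "M a = m a" unfolding M_def using an sS by simp
    have R: "?R \<longleftrightarrow> b = m a - 1 \<and> 2 \<le> m a" unfolding Estar_iff using a1 an True mS by auto
    have MS: "M (Suc a) < m a" if m2: "2 \<le> m a"
    proof (cases "Suc a < n")
      case True
      have "s (Suc (Suc a)) \<le> s (Suc a)" using s_mono[of "Suc a"] a1 by simp
      then show ?thesis unfolding M_def using True sS mS \<open>\<pi> (Suc a) < m a\<close> mpos by auto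
    next
      case False
      then have "M (Suc a) = 1" unfolding M_def using an by simp
      then show ?thesis using m2 by simp
    qed
    have la: "lam a = m a - 1" unfolding lam_def using Ma by simp
    show ?thesis
    proof
      assume ?L
      then have b: "1 \<le> b" "b = m a - 1" using LL la by auto
      then show ?R using R by simp
    next
      assume ?R
      then have b: "b = m a - 1" "2 \<le> m a" using R by auto
      have "lam (Suc a) < b" using MS[OF b(2)] Mpos1 b unfolding lam_def by simp
      then show ?L using LL la b by simp
    qed
  next
    case False
    have gt: "m a < \<pi> (Suc a)" using False ne_m[OF a1] by linarith
    have mS: "m (Suc a) = m a" using s_Suc_gt(1)[OF a1 gt] .
    have a2: "2 \<le> Suc a" using a1 by simp
    have ms: "m a < s (Suc a)" using m_lt_s[OF a2] mS by simp
    have Ma: "M a = s (Suc a) - 1" unfolding M_def using an ms by simp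
    have la: "lam a = s (Suc a) - 2" unfolding lam_def using Ma by simp
    have R: "?R \<longleftrightarrow> Suc a < n \<and> b = s (Suc a) - 2 \<and> m a + 1 < s (Suc a) \<and> \<pi> (Suc (Suc a)) < s (Suc a)"
      unfolding Estar_iff using a1 an False gt mS by auto
    show ?thesis
    proof (cases "Suc a < n")
      case False
      then have "Suc a = n" using an by simp
      then have "s (Suc a) = 2" using s_n a2 by simp
      then have "lam a = 0" using la by simp
      then have "\<not> ?L" using LL by simp
      moreover have "\<not> ?R" using R False by simp
      ultimately show ?thesis by blast
    next
      case True
      have MS: "M (Suc a) = max (m a) (s (Suc (Suc a)) - 1)" unfolding M_def using True mS by simp
      have st: "s (Suc (Suc a)) < s (Suc a) \<longleftrightarrow> \<pi> (Suc (Suc a)) < s (Suc a)" using s_step[OF a2] .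
      have spos: "1 \<le> s (Suc (Suc a))" using m_lt_s[of "Suc (Suc a)"] by simp
      show ?thesis
      proof
        assume ?L
        then have b: "1 \<le> b" "b = s (Suc a) - 2" "lam (Suc a) < b" using LL la by auto
        then have "M (Suc a) < s (Suc a) - 1" using Mpos1 unfolding lam_def by linarith
        then have "m a + 1 < s (Suc a)" "s (Suc (Suc a)) < s (Suc a)" using MS spos by auto
        then show ?R using R True b st by simp
      next
        assume ?R
        then have c: "b = s (Suc a) - 2" "m a + 1 < s (Suc a)" "\<pi> (Suc (Suc a)) < s (Suc a)" using R by auto
        have "s (Suc (Suc a)) < s (Suc a)" using c st by simp
        then have "M (Suc a) \<le> s (Suc a) - 2" using MS c by (simp, intro conjI; linarith)
        then have "lam (Suc a) < b" "1 \<le> b" using c mpos Mpos1 unfolding lam_def by linarith+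
        then show ?L using LL la c by simp
      qed
    qed
  qed
qed

end


context pm begin

lemma pi_upper:
  assumes "incs n \<pi> k" "1 \<le> k"
  shows "\<exists>i\<in>{1..n}. k + i + M i \<le> n + 2"
proof -
  obtain S where S: "S \<subseteq> {1..n}" "card S = k" and inc: "\<forall>a\<in>S. \<forall>b\<in>S. a < b \<longrightarrow> \<pi> a < \<pi> b"
    using assms(1) unfolding incs_def by blast
  have fin: "finite S" using S(1) finite_subset by blast
  have Sne: "S \<noteq> {}" using S(2) assms(2) by auto
  then have n1: "1 \<le> n" using S(1) by auto
  show ?thesis
  proof (cases "k = 1")
    case True
    have "M n = 1" unfolding M_def by simp
    then show ?thesis using True n1 by (intro bexI[of _ n]) auto
  next
    case False
    then have k2: "2 \<le> k" using assms(2) by simp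
    define p1 where "p1 = Min S"
    define S1 where "S1 = S - {p1}"
    have p1S: "p1 \<in> S" unfolding p1_def using fin Sne by (rule Min_in)
    have p1le: "\<And>x. x \<in> S \<Longrightarrow> p1 \<le> x" unfolding p1_def using fin by simp
    have cS1: "card S1 = k - 1" unfolding S1_def using p1S fin S(2) by simp
    have fin1: "finite S1" unfolding S1_def using fin by simp
    have S1ne: "S1 \<noteq> {}" using cS1 k2 by auto
    define p2 where "p2 = Min S1"
    define S2 where "S2 = S1 - {p2}"
    have p2S: "p2 \<in> S1" unfolding p2_def using fin1 S1ne by (rule Min_in)
    have p2le: "\<And>x. x \<in> S1 \<Longrightarrow> p2 \<le> x" unfolding p2_def using fin1 by simp
    have cS2: "card S2 = k - 2" unfolding S2_def using p2S fin1 cS1 by simp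
    have p12: "p1 < p2" using p2S p1le unfolding S1_def by (metis DiffE insertI1 le_neq_implies_less)
    have S1gt: "\<And>x. x \<in> S1 \<Longrightarrow> p1 < x" unfolding S1_def using p1le by (metis DiffE insertI1 le_neq_implies_less)
    have S2gt: "\<And>x. x \<in> S2 \<Longrightarrow> p2 < x" unfolding S2_def using p2le by (metis DiffE insertI1 le_neq_implies_less)
    have p1n: "p1 \<in> {1..n}" using p1S S(1) by blast
    have p2n: "p2 \<in> {1..n}" using p2S S(1) unfolding S1_def by blast
    define i where "i = p2 - 1"
    have p2i: "p2 = Suc i" unfolding i_def using p12 by simp
    have i1: "1 \<le> i" using p12 p1n p2i by simp
    have inn: "i < n" using p2n p2i by simp
    have p1i: "p1 \<in> {1..i}" using p1n p12 p2i by simp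
    have A: "k + i + m i \<le> n + 2"
    proof -
      have sub: "S1 \<subseteq> {i+1..n}" using S1gt p2le p2i S(1) unfolding S1_def by fastforce
      have gtm: "\<forall>r\<in>S1. m i < \<pi> r"
      proof
        fix r assume r: "r \<in> S1"
        have "\<pi> p1 < \<pi> r" using inc p1S r S1gt unfolding S1_def by blast
        moreover have "m i \<le> \<pi> p1" using m_le[OF p1i] .
        ultimately show "m i < \<pi> r" by simp
      qed
      have "card S1 + i \<le> n - m i + card {r\<in>{1..i}. \<pi> r \<le> m i}"
        using cnt_bound[OF perm _ _ sub gtm] inn m_len[OF i1] by simp
      then show ?thesis using cS1 cnt_m[OF i1] m_len[OF i1] inn k2 by simp
    qed
    have B: "k + i + (s (Suc i) - 1) \<le> n + 2"
    proof -
      have i2: "2 \<le> Suc i" using i1 by simp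
      have sub: "S2 \<subseteq> {Suc i+1..n}" using S2gt p2i S(1) unfolding S2_def S1_def by fastforce
      have p2ne: "\<pi> p2 \<noteq> m (Suc i)"
      proof
        assume "\<pi> p2 = m (Suc i)"
        moreover have "\<pi> p1 < \<pi> p2" using inc p1S p2S p12 unfolding S1_def by blast
        moreover have "m (Suc i) \<le> \<pi> p1" using m_le p1i by simp
        ultimately show False by simp
      qed
      have sp2: "s (Suc i) \<le> \<pi> p2" using s_le[OF i2 _ p2ne] p2n p2i by simp
      have gts: "\<forall>r\<in>S2. s (Suc i) < \<pi> r"
      proof
        fix r assume r: "r \<in> S2"
        have "\<pi> p2 < \<pi> r" using inc p2S r S2gt unfolding S2_def S1_def by blast
        then show "s (Suc i) < \<pi> r" using sp2 by simp
      qed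
      have sn: "s (Suc i) \<le> n" using s_len[OF i2] inn by simp
      have "card S2 + Suc i \<le> n - s (Suc i) + card {r\<in>{1..Suc i}. \<pi> r \<le> s (Suc i)}"
        using cnt_bound[OF perm _ _ sub gts] inn sn by simp
      moreover have "1 \<le> s (Suc i)" using m_lt_s[OF i2] by simp
      ultimately show ?thesis using cS2 cnt_s[OF i2] sn k2 by (simp; linarith)
    qed
    have "M i = max (m i) (s (Suc i) - 1)" unfolding M_def using inn by simp
    then have "k + i + M i \<le> n + 2" using A B by simp
    then show ?thesis using i1 inn by (intro bexI[of _ i]) auto
  qed
qed

end

context spm begin

lemma pi_lower:
  assumes i: "i \<in> {1..n}" and kb: "k + i + M i \<le> n + 2"
  shows "incs n \<pi> k"
proof (cases "k \<le> 1")
  case True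
  have "{1} \<subseteq> {1..n}" using i by simp
  then show ?thesis using True by (intro incs_of_set[of "{1}"]) auto
next
  case False
  then have k2: "2 \<le> k" by simp
  have i1: "1 \<le> i" using i by simp
  have inn: "i < n"
  proof (rule ccontr)
    assume "\<not> i < n"
    then have "M i = 1" unfolding M_def by simp
    moreover have "i = n" using \<open>\<not> i < n\<close> i by simp
    ultimately show False using kb k2 by simp
  qed
  have i2: "2 \<le> Suc i" using i1 by simp
  have Sin: "Suc i \<le> n" using inn by simp
  obtain p where p: "p \<in> {1..i}" "\<pi> p = m i" using m_ex[OF i1] by blast
  have mn: "m i \<le> n" using m_len i1 inn by simp
  have mb: "m i + i \<le> n + 1" using m_bound i1 inn by simp
  show ?thesis
  proof (cases "\<pi> (Suc i) < m i")
    case True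
    have sS: "s (Suc i) = m i" using s_Suc_lt(1)[OF i1 True] .
    have Ma: "M i = m i" unfolding M_def using inn sS by simp
    define T where "T = {r\<in>{Suc i+1..n}. m i < \<pi> r}"
    have cT: "card T + Suc i = n - m i + 2"
      using cnt_lemma[OF perm Sin mn] cnt_s[OF i2] sS unfolding T_def by simp
    have finT: "finite T" unfolding T_def by simp
    have pT: "p \<notin> T" unfolding T_def using p by simp
    define S where "S = insert p T"
    have cS: "card S = card T + 1" unfolding S_def using finT pT by simp
    have sub: "S \<subseteq> {1..n}" unfolding S_def T_def using p inn by auto
    have kS: "k \<le> card S" using cS cT kb Ma mb by linarith
    have inc: "\<forall>a\<in>S. \<forall>b\<in>S. a < b \<longrightarrow> \<pi> a < \<pi> b"
    proof (intro ballI impI)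
      fix a b assume a: "a \<in> S" and b: "b \<in> S" and ab: "a < b"
      show "\<pi> a < \<pi> b"
      proof (cases "a = p")
        case True
        have "b \<noteq> p" using ab True by simp
        then have "b \<in> T" using b unfolding S_def by simp
        then show ?thesis using True p unfolding T_def by simp
      next
        case False
        then have aT: "a \<in> T" using a unfolding S_def by simp
        have "b \<noteq> p" using aT ab p unfolding T_def by auto
        then have bT: "b \<in> T" using b unfolding S_def by simp
        show ?thesis
        proof (rule schr)
          show "1 \<le> p" "p < Suc i" using p by auto
          show "Suc i < a" "b \<le> n" "\<pi> p < \<pi> b" using aT bT p unfolding T_def by auto
          show "a < b" by (rule ab)
          show "\<pi> (Suc i) < \<pi> b" using bT True unfolding T_def by simp
        qed
      qed
    qed
    show ?thesis using incs_of_set[OF sub kS inc] .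
  next
    case False
    have gt: "m i < \<pi> (Suc i)" using False ne_m[OF i1] by linarith
    have mS: "m (Suc i) = m i" using s_Suc_gt(1)[OF i1 gt] .
    define s' where "s' = s (Suc i)"
    have ms: "m i < s'" using m_lt_s[OF i2] mS unfolding s'_def by simp
    have Ma: "M i = s' - 1" unfolding M_def s'_def using inn ms unfolding s'_def by simp
    obtain q where q: "q \<in> {1..Suc i}" "\<pi> q = s'" using s_ex[OF i2] unfolding s'_def by blast
    have pq: "p \<noteq> q" using p q ms by auto
    have sn: "s' \<le> n" using s_len[OF i2 Sin] unfolding s'_def .
    have sb: "s' + Suc i \<le> n + 2" using s_bound[OF i2 Sin] unfolding s'_def .
    define T where "T = {r\<in>{Suc i+1..n}. s' < \<pi> r}"
    have cT: "card T + Suc i = n - s' + 2"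
      using cnt_lemma[OF perm Sin sn] cnt_s[OF i2] unfolding T_def s'_def by simp
    have finT: "finite T" unfolding T_def by simp
    have Tgt: "\<And>r. r \<in> T \<Longrightarrow> Suc i < r \<and> r \<le> n \<and> s' < \<pi> r" unfolding T_def by auto
    show ?thesis
    proof (cases "p < q")
      case True
      define S where "S = insert p (insert q T)"
      have pT: "p \<notin> T" using Tgt p by fastforce
      have qT: "q \<notin> T" using Tgt q by fastforce
      have cS: "card S = card T + 2" unfolding S_def using finT pT qT pq by simp
      have sub: "S \<subseteq> {1..n}" unfolding S_def using p q inn Tgt by fastforce
      have kS: "k \<le> card S" using cS cT kb Ma sb ms by linarith
      have inc: "\<forall>a\<in>S. \<forall>b\<in>S. a < b \<longrightarrow> \<pi> a < \<pi> b"
      proof (intro ballI impI)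
        fix a b assume a: "a \<in> S" and b: "b \<in> S" and ab: "a < b"
        have bnp: "b \<noteq> p"
        proof
          assume "b = p"
          then have "a \<in> T \<or> a = q" using a ab unfolding S_def by auto
          then show False using Tgt ab \<open>b = p\<close> p True by fastforce
        qed
        show "\<pi> a < \<pi> b"
        proof (cases "a = p")
          case ap: True
          show ?thesis
          proof (cases "b = q")
            case True then show ?thesis using ap p q ms by simp
          next
            case False
            then have "b \<in> T" using b bnp unfolding S_def by simp
            then show ?thesis using ap p Tgt ms by fastforce
          qed
        next
          case anp: False
          show ?thesis
          proof (cases "a = q")
            case aq: True
            have "b \<noteq> q" using ab aq by simp
            then have "b \<in> T" using b bnp unfolding S_def by simp
            then show ?thesis using aq q Tgt by fastforce
          next
            case False
            then have aT: "a \<in> T" using a anp unfolding S_def by simp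
            have "b \<noteq> q" using aT ab q Tgt by fastforce
            then have bT: "b \<in> T" using b bnp unfolding S_def by simp
            show ?thesis
            proof (rule schr)
              show "1 \<le> p" "p < q" using p True by auto
              show "q < a" using aT Tgt q by fastforce
              show "a < b" by (rule ab)
              show "b \<le> n" using bT Tgt by blast
              show "\<pi> p < \<pi> b" using bT Tgt p ms by fastforce
              show "\<pi> q < \<pi> b" using bT Tgt q by fastforce
            qed
          qed
        qed
      qed
      show ?thesis using incs_of_set[OF sub kS inc] .
    next
      case False
      then have qp: "q < p" using pq by simp
      define T' where "T' = {r\<in>{p+1..n}. s' < \<pi> r}"
      have finT': "finite T'" unfolding T'_def by simp
      have T'gt: "\<And>r. r \<in> T' \<Longrightarrow> p < r \<and> r \<le> n \<and> s' < \<pi> r" unfolding T'_def by auto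
      have vs: "s' < \<pi> (Suc i)"
      proof -
        have "\<pi> (Suc i) \<noteq> m (Suc i)" using gt mS by simp
        then have "s' \<le> \<pi> (Suc i)" using s_le[OF i2, of "Suc i"] unfolding s'_def by simp
        moreover have "\<pi> (Suc i) \<noteq> s'"
        proof
          assume "\<pi> (Suc i) = s'"
          then have "\<pi> (Suc i) = \<pi> q" using q by simp
          then have "Suc i = q" by (rule inj)
          then show False using qp p by simp
        qed
        ultimately show ?thesis by simp
      qed
      have subT: "insert (Suc i) T \<subseteq> T'" unfolding T'_def using Tgt vs p inn by fastforce
      have SiT: "Suc i \<notin> T" using Tgt by blast
      have "card (insert (Suc i) T) \<le> card T'" using card_mono[OF finT' subT] .
      then have cT': "card T + 1 \<le> card T'" using finT SiT by simp
      define S where "S = insert p T'"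
      have pT': "p \<notin> T'" using T'gt by blast
      have cS: "card S = card T' + 1" unfolding S_def using finT' pT' by simp
      have sub: "S \<subseteq> {1..n}" unfolding S_def using p inn T'gt by fastforce
      have kS: "k \<le> card S" using cS cT' cT kb Ma sb ms by linarith
      have inc: "\<forall>a\<in>S. \<forall>b\<in>S. a < b \<longrightarrow> \<pi> a < \<pi> b"
      proof (intro ballI impI)
        fix a b assume a: "a \<in> S" and b: "b \<in> S" and ab: "a < b"
        have bnp: "b \<noteq> p"
        proof
          assume "b = p"
          then have "a \<in> T'" using a ab unfolding S_def by auto
          then show False using T'gt ab \<open>b = p\<close> by fastforce
        qed
        then have bT: "b \<in> T'" using b unfolding S_def by simp
        show "\<pi> a < \<pi> b"
        proof (cases "a = p")
          case True
          then show ?thesis using bT T'gt p ms by fastforce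
        next
          case False
          then have aT: "a \<in> T'" using a unfolding S_def by simp
          show ?thesis
          proof (rule schr)
            show "1 \<le> q" "q < p" using q qp by auto
            show "p < a" using aT T'gt by blast
            show "a < b" by (rule ab)
            show "b \<le> n" using bT T'gt by blast
            show "\<pi> q < \<pi> b" using bT T'gt q by fastforce
            show "\<pi> p < \<pi> b" using bT T'gt p ms by fastforce
          qed
        qed
      qed
      show ?thesis using incs_of_set[OF sub kS inc] .
    qed
  qed
qed

end


fun used :: "nat \<Rightarrow> (nat \<Rightarrow> nat) \<Rightarrow> nat \<Rightarrow> nat set" where
  "used n l 0 = {}"
| "used n l (Suc i) = insert (Min ({l (Suc i) + 1..n} - used n l i)) (used n l i)"

definition dom_perm :: "nat \<Rightarrow> (nat \<Rightarrow> nat) \<Rightarrow> nat \<Rightarrow> nat" where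
  "dom_perm n l i = (if i \<in> {1..n} then Min ({l i + 1..n} - used n l (i - 1)) else i)"

locale domc =
  fixes n :: nat and l :: "nat \<Rightarrow> nat"
  assumes lmono: "\<And>i. 1 \<le> i \<Longrightarrow> Suc i \<le> n \<Longrightarrow> l (Suc i) \<le> l i"
    and lbound: "\<And>i. 1 \<le> i \<Longrightarrow> i \<le> n \<Longrightarrow> l i + i \<le> n"
begin

abbreviation "\<sigma> \<equiv> dom_perm n l"

lemma l_anti: assumes "1 \<le> k" "k \<le> i" "i \<le> n" shows "l i \<le> l k"
  using assms
proof (induction i)
  case 0 then show ?case by simp
next
  case (Suc i)
  show ?case
  proof (cases "k = Suc i")
    case True then show ?thesis by simp
  next
    case False
    then have "k \<le> i" using Suc.prems by simp
    then have "l i \<le> l k" using Suc.IH Suc.prems by simp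
    moreover have "l (Suc i) \<le> l i" using lmono[of i] Suc.prems \<open>k \<le> i\<close> by simp
    ultimately show ?thesis by simp
  qed
qed

lemma used_eq: "i \<le> n \<Longrightarrow> used n l i = \<sigma> ` {1..i}"
proof (induction i)
  case 0 then show ?case by simp
next
  case (Suc i)
  have "\<sigma> (Suc i) = Min ({l (Suc i) + 1..n} - used n l i)"
    unfolding dom_perm_def using Suc.prems by simp
  moreover have "{1..Suc i} = insert (Suc i) {1..i}" by auto
  ultimately show ?case using Suc by simp
qed

lemma fin_used: "finite (used n l i)"
  by (induction i) auto

lemma ne: assumes "i \<in> {1..n}" shows "{l i + 1..n} - used n l (i - 1) \<noteq> {}"
proof
  assume e: "{l i + 1..n} - used n l (i - 1) = {}"
  then have "{l i + 1..n} \<subseteq> used n l (i - 1)" by blast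
  then have "card {l i + 1..n} \<le> card (used n l (i - 1))" using fin_used by (rule card_mono[rotated])
  moreover have "card (used n l (i - 1)) \<le> i - 1"
  proof -
    have "used n l (i - 1) = \<sigma> ` {1..i - 1}" using used_eq[of "i - 1"] assms by (metis atLeastAtMost_iff diff_le_self le_trans)
    then show ?thesis using card_image_le[of "{1..i-1}" \<sigma>] by simp
  qed
  moreover have "card {l i + 1..n} = n - l i" by simp
  moreover have "l i + i \<le> n" using lbound assms by simp
  ultimately show False using assms by simp
qed

lemma sig_in: assumes "i \<in> {1..n}"
  shows "\<sigma> i \<in> {l i + 1..n} - \<sigma> ` {1..i - 1}"
    and "\<And>v. v \<in> {l i + 1..n} \<Longrightarrow> v \<notin> \<sigma> ` {1..i - 1} \<Longrightarrow> \<sigma> i \<le> v"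
proof -
  have u: "used n l (i - 1) = \<sigma> ` {1..i - 1}" using used_eq[of "i - 1"] assms by (metis atLeastAtMost_iff diff_le_self le_trans)
  have d: "\<sigma> i = Min ({l i + 1..n} - used n l (i - 1))" unfolding dom_perm_def using assms by simp
  show "\<sigma> i \<in> {l i + 1..n} - \<sigma> ` {1..i - 1}" unfolding d u[symmetric]
    using ne[OF assms] by (intro Min_in) auto
  fix v assume "v \<in> {l i + 1..n}" "v \<notin> \<sigma> ` {1..i - 1}"
  then show "\<sigma> i \<le> v" unfolding d u[symmetric] by (intro Min_le) auto
qed

lemma sig_range: "i \<in> {1..n} \<Longrightarrow> \<sigma> i \<in> {1..n}" using sig_in(1) by fastforce

lemma sig_gt: "i \<in> {1..n} \<Longrightarrow> l i < \<sigma> i" using sig_in(1) by fastforce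

lemma sig_ne: assumes "i \<in> {1..n}" "k \<in> {1..n}" "k < i" shows "\<sigma> k \<noteq> \<sigma> i"
proof -
  have "\<sigma> i \<notin> \<sigma> ` {1..i - 1}" using sig_in(1)[OF assms(1)] by blast
  moreover have "k \<in> {1..i - 1}" using assms by auto
  then have "\<sigma> k \<in> \<sigma> ` {1..i - 1}" by (rule imageI)
  ultimately show ?thesis by metis
qed

lemma sig_inj: "inj_on \<sigma> {1..n}"
proof (rule inj_onI)
  fix x y assume x: "x \<in> {1..n}" and y: "y \<in> {1..n}" and e: "\<sigma> x = \<sigma> y"
  show "x = y"
  proof (rule ccontr)
    assume "x \<noteq> y"
    then have "x < y \<or> y < x" by auto
    then show False using sig_ne x y e by metis
  qed
qed

lemma sig_perm: "\<sigma> permutes {1..n}"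
proof (rule bij_imp_permutes)
  have "\<sigma> ` {1..n} \<subseteq> {1..n}" using sig_range by blast
  then have "\<sigma> ` {1..n} = {1..n}" using endo_inj_surj[OF _ _ sig_inj] by simp
  then show "bij_betw \<sigma> {1..n} {1..n}" using sig_inj by (simp add: bij_betw_def)
next
  fix x assume a: "x \<notin> {1..n}" then show "\<sigma> x = x" unfolding dom_perm_def by (rule if_not_P)
qed

definition Y :: "(nat \<times> nat) set" where "Y = {(i,j). i \<in> {1..n} \<and> 1 \<le> j \<and> j \<le> l i}"

lemma sig_diag: "diagram n \<sigma> = Y"
proof (intro set_eqI iffI)
  fix x assume x: "x \<in> diagram n \<sigma>"
  obtain i j where ij: "x = (i,j)" by (cases x)
  have D: "i \<in> {1..n}" "j \<in> {1..n}" "j < \<sigma> i" "\<forall>k\<in>{1..i}. \<sigma> k \<noteq> j"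
    using x diag_iff[OF sig_perm] ij by auto
  have "j \<le> l i"
  proof (rule ccontr)
    assume "\<not> j \<le> l i"
    then have jr: "j \<in> {l i + 1..n}" using D by auto
    have "j \<in> \<sigma> ` {1..i - 1}"
    proof (rule ccontr)
      assume "j \<notin> \<sigma> ` {1..i - 1}"
      then have "\<sigma> i \<le> j" using sig_in(2)[OF D(1) jr] by simp
      then show False using D by simp
    qed
    then obtain k where "k \<in> {1..i - 1}" "j = \<sigma> k" by blast
    then show False using D(4) by auto
  qed
  then show "x \<in> Y" unfolding Y_def using ij D by simp
next
  fix x assume x: "x \<in> Y"
  obtain i j where ij: "x = (i,j)" by (cases x)
  have y: "i \<in> {1..n}" "1 \<le> j" "j \<le> l i" using x ij unfolding Y_def by auto
  have "j \<le> n" using y lbound[of i] by simp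
  moreover have "j < \<sigma> i" using sig_gt[OF y(1)] y by simp
  moreover have "\<forall>k\<in>{1..i}. \<sigma> k \<noteq> j"
  proof
    fix k assume k: "k \<in> {1..i}"
    have "l i \<le> l k" using l_anti[of k i] k y by simp
    moreover have "l k < \<sigma> k" using sig_gt k y by simp
    ultimately show "\<sigma> k \<noteq> j" using y by simp
  qed
  ultimately show "x \<in> diagram n \<sigma>" using diag_iff[OF sig_perm] ij y by simp
qed

lemma sig_ess: "(a,b) \<in> essential_set n \<sigma> \<longleftrightarrow>
   (1 \<le> a \<and> a \<le> n \<and> 1 \<le> b \<and> b \<le> l a \<and> \<not> (Suc a \<le> n \<and> b \<le> l (Suc a)) \<and> \<not> Suc b \<le> l a)"
  unfolding essential_set_def sig_diag Y_def by auto

lemma sig_rank0: assumes "(a,b) \<in> essential_set n \<sigma>" shows "rank \<sigma> (a,b) = 0"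
proof -
  have y: "1 \<le> a" "a \<le> n" "1 \<le> b" "b \<le> l a" using assms sig_ess by auto
  have "{k. 1 \<le> k \<and> k < a \<and> \<sigma> k < b} = {}"
  proof (intro equalityI subsetI)
    fix k assume k: "k \<in> {k. 1 \<le> k \<and> k < a \<and> \<sigma> k < b}"
    have "l a \<le> l k" using l_anti[of k a] k y by simp
    moreover have "l k < \<sigma> k" using sig_gt k y by simp
    ultimately show "k \<in> {}" using k y by simp
  qed simp
  then show ?thesis unfolding rank_def by simp
qed

end


lemma diag_det_aux:
  fixes \<sigma>1 \<sigma>2 :: "nat \<Rightarrow> nat"
  assumes p1: "\<sigma>1 permutes {1..n}" and p2: "\<sigma>2 permutes {1..n}"
    and D: "diagram n \<sigma>1 = diagram n \<sigma>2" and i: "i \<in> {1..n}"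
    and agree: "\<forall>k. 1 \<le> k \<and> k < i \<longrightarrow> \<sigma>1 k = \<sigma>2 k" and lt: "\<sigma>1 i < \<sigma>2 i"
  shows False
proof -
  define j where "j = \<sigma>1 i"
  have j: "j \<in> {1..n}" unfolding j_def using perm_in[OF p1 i] .
  have "\<forall>k\<in>{1..i}. \<sigma>2 k \<noteq> j"
  proof
    fix k assume k: "k \<in> {1..i}"
    show "\<sigma>2 k \<noteq> j"
    proof (cases "k = i")
      case True then show ?thesis using lt j_def by simp
    next
      case False
      then have "\<sigma>2 k = \<sigma>1 k" using agree k by simp
      moreover have "\<sigma>1 k \<noteq> \<sigma>1 i"
      proof
        assume "\<sigma>1 k = \<sigma>1 i"
        then have "k = i" by (rule perm_inj[OF p1])
        then show False using False by simp
      qed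
      ultimately show ?thesis unfolding j_def by simp
    qed
  qed
  then have "(i, j) \<in> diagram n \<sigma>2" using diag_iff[OF p2] i j lt j_def by simp
  then have "(i, j) \<in> diagram n \<sigma>1" using D by simp
  then show False using diag_iff[OF p1] j_def by simp
qed

lemma diag_det:
  fixes \<sigma>1 \<sigma>2 :: "nat \<Rightarrow> nat"
  assumes p1: "\<sigma>1 permutes {1..n}" and p2: "\<sigma>2 permutes {1..n}"
    and D: "diagram n \<sigma>1 = diagram n \<sigma>2"
  shows "\<sigma>1 = \<sigma>2"
proof -
  have main: "i \<in> {1..n} \<longrightarrow> \<sigma>1 i = \<sigma>2 i" for i
  proof (induction i rule: less_induct)
    case (less i)
    show ?case
    proof
      assume i: "i \<in> {1..n}"
      have agree: "\<forall>k. 1 \<le> k \<and> k < i \<longrightarrow> \<sigma>1 k = \<sigma>2 k" using less i by auto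
      show "\<sigma>1 i = \<sigma>2 i"
      proof (rule linorder_cases[of "\<sigma>1 i" "\<sigma>2 i"])
        assume "\<sigma>1 i < \<sigma>2 i" then show ?thesis using diag_det_aux[OF p1 p2 D i agree] by simp
      next
        assume "\<sigma>1 i = \<sigma>2 i" then show ?thesis .
      next
        assume "\<sigma>2 i < \<sigma>1 i"
        moreover have "\<forall>k. 1 \<le> k \<and> k < i \<longrightarrow> \<sigma>2 k = \<sigma>1 k" using agree by simp
        ultimately show ?thesis using diag_det_aux[OF p2 p1 D[symmetric] i] by simp
      qed
    qed
  qed
  show ?thesis
  proof
    fix x show "\<sigma>1 x = \<sigma>2 x"
    proof (cases "x \<in> {1..n}")
      case True then show ?thesis using main by simp
    next
      case False then show ?thesis using permutes_not_in[OF p1 False] permutes_not_in[OF p2 False] by simp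
    qed
  qed
qed

lemma walk:
  fixes \<sigma> :: "nat \<Rightarrow> nat"
  assumes p: "\<sigma> permutes {1..n}"
  shows "(i,j) \<in> diagram n \<sigma> \<Longrightarrow> \<exists>a b. (a,b) \<in> essential_set n \<sigma> \<and> i \<le> a \<and> j \<le> b"
proof (induction "2*n - i - j" arbitrary: i j rule: less_induct)
  case less
  show ?case
  proof (cases "(i,j) \<in> essential_set n \<sigma>")
    case True then show ?thesis by blast
  next
    case False
    have ij: "i \<le> n" "j \<le> n" using less.prems diag_iff[OF p] by auto
    from False less.prems have "(Suc i, j) \<in> diagram n \<sigma> \<or> (i, Suc j) \<in> diagram n \<sigma>"
      unfolding essential_set_def by auto
    then show ?thesis
    proof
      assume a: "(Suc i, j) \<in> diagram n \<sigma>"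
      then have "Suc i \<le> n" using diag_iff[OF p] by auto
      then have "2*n - Suc i - j < 2*n - i - j" using ij by simp
      then obtain a b where "(a,b) \<in> essential_set n \<sigma>" "Suc i \<le> a" "j \<le> b" using less.hyps a by blast
      then show ?thesis by (intro exI[of _ a] exI[of _ b]) simp
    next
      assume a: "(i, Suc j) \<in> diagram n \<sigma>"
      then have "Suc j \<le> n" using diag_iff[OF p] by auto
      then have "2*n - i - Suc j < 2*n - i - j" using ij by simp
      then obtain a b where "(a,b) \<in> essential_set n \<sigma>" "i \<le> a" "Suc j \<le> b" using less.hyps a by blast
      then show ?thesis by (intro exI[of _ a] exI[of _ b]) simp
    qed
  qed
qed

lemma diag_from_ess:
  fixes \<sigma> :: "nat \<Rightarrow> nat"
  assumes p: "\<sigma> permutes {1..n}" and r0: "\<forall>e\<in>essential_set n \<sigma>. rank \<sigma> e = 0"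
  shows "diagram n \<sigma> = {(i,j). 1 \<le> i \<and> 1 \<le> j \<and> (\<exists>a b. (a,b) \<in> essential_set n \<sigma> \<and> i \<le> a \<and> j \<le> b)}"
proof (intro set_eqI iffI)
  fix x assume x: "x \<in> diagram n \<sigma>"
  obtain i j where ij: "x = (i,j)" by (cases x)
  have "1 \<le> i" "1 \<le> j" using x ij diag_iff[OF p] by auto
  then show "x \<in> {(i,j). 1 \<le> i \<and> 1 \<le> j \<and> (\<exists>a b. (a,b) \<in> essential_set n \<sigma> \<and> i \<le> a \<and> j \<le> b)}"
    using walk[OF p, of i j] x ij by auto
next
  fix x assume x: "x \<in> {(i,j). 1 \<le> i \<and> 1 \<le> j \<and> (\<exists>a b. (a,b) \<in> essential_set n \<sigma> \<and> i \<le> a \<and> j \<le> b)}"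
  obtain i j where ij: "x = (i,j)" by (cases x)
  obtain a b where ab: "(a,b) \<in> essential_set n \<sigma>" "i \<le> a" "j \<le> b" and i1: "1 \<le> i" and j1: "1 \<le> j"
    using x ij by auto
  have Dab: "(a,b) \<in> diagram n \<sigma>" using ab(1) unfolding essential_set_def by blast
  then have a: "a \<in> {1..n}" "b \<in> {1..n}" "b < \<sigma> a" "\<forall>k\<in>{1..a}. \<sigma> k \<noteq> b" using diag_iff[OF p] by auto
  have "rank \<sigma> (a,b) = 0" using r0 ab(1) by blast
  then have "{k. 1 \<le> k \<and> k < a \<and> \<sigma> k < b} = {}"
    unfolding rank_def by (simp add: card_eq_0_iff finite_subset[of _ "{..<a}"] subset_eq)
  then have r: "\<forall>k. 1 \<le> k \<and> k < a \<longrightarrow> b \<le> \<sigma> k" by auto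
  have gt: "\<forall>k\<in>{1..a}. b < \<sigma> k"
  proof
    fix k assume k: "k \<in> {1..a}"
    show "b < \<sigma> k"
    proof (cases "k = a")
      case True then show ?thesis using a by simp
    next
      case False
      then have "b \<le> \<sigma> k" using r k by simp
      moreover have "\<sigma> k \<noteq> b" using a k by blast
      ultimately show ?thesis by simp
    qed
  qed
  have "i \<in> {1..n}" "j \<in> {1..n}" using i1 j1 ab a by auto
  moreover have "j < \<sigma> i"
  proof -
    have "i \<in> {1..a}" using i1 ab by simp
    then have "b < \<sigma> i" using gt by blast
    then show ?thesis using ab by simp
  qed
  moreover have "\<forall>k\<in>{1..i}. \<sigma> k \<noteq> j"
  proof
    fix k assume "k \<in> {1..i}"
    then have "k \<in> {1..a}" using ab by simp
    then have "b < \<sigma> k" using gt by blast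
    then show "\<sigma> k \<noteq> j" using ab by simp
  qed
  ultimately show "x \<in> diagram n \<sigma>" using diag_iff[OF p] ij by simp
qed

lemma unique_dom:
  fixes \<sigma>1 \<sigma>2 :: "nat \<Rightarrow> nat"
  assumes p1: "\<sigma>1 permutes {1..n}" and p2: "\<sigma>2 permutes {1..n}"
    and E: "essential_set n \<sigma>1 = essential_set n \<sigma>2"
    and r1: "\<forall>e\<in>essential_set n \<sigma>1. rank \<sigma>1 e = 0"
    and r2: "\<forall>e\<in>essential_set n \<sigma>2. rank \<sigma>2 e = 0"
  shows "\<sigma>1 = \<sigma>2"
proof (rule diag_det[OF p1 p2])
  show "diagram n \<sigma>1 = diagram n \<sigma>2"
    unfolding diag_from_ess[OF p1 r1] diag_from_ess[OF p2 r2] E ..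
qed


context domc begin

lemma sig_C_le1: assumes i: "i \<in> {1..n}"
  shows "card {r\<in>{1..i}. \<sigma> r \<le> l i + 1} \<le> 1"
proof -
  let ?C = "{r\<in>{1..i}. \<sigma> r \<le> l i + 1}"
  have "\<forall>x\<in>?C. \<forall>y\<in>?C. x = y"
  proof (intro ballI)
    fix x y assume x: "x \<in> ?C" and y: "y \<in> ?C"
    have "\<sigma> x = l i + 1"
    proof -
      have "l i \<le> l x" using l_anti[of x i] x i by simp
      moreover have "l x < \<sigma> x" using sig_gt x i by simp
      ultimately show ?thesis using x by simp
    qed
    moreover have "\<sigma> y = l i + 1"
    proof -
      have "l i \<le> l y" using l_anti[of y i] y i by simp
      moreover have "l y < \<sigma> y" using sig_gt y i by simp
      ultimately show ?thesis using y by simp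
    qed
    ultimately have "\<sigma> x = \<sigma> y" by simp
    then show "x = y" by (rule perm_inj[OF sig_perm])
  qed
  then show ?thesis using card_le_Suc0_iff_eq[of ?C] by simp
qed

lemma sig_upper:
  assumes "incs n \<sigma> k" "1 \<le> k"
  shows "\<exists>i\<in>{1..n}. k + i + l i \<le> n + 1"
proof -
  obtain S where S: "S \<subseteq> {1..n}" "card S = k" and inc: "\<forall>a\<in>S. \<forall>b\<in>S. a < b \<longrightarrow> \<sigma> a < \<sigma> b"
    using assms(1) unfolding incs_def by blast
  have fin: "finite S" using S(1) finite_subset by blast
  have Sne: "S \<noteq> {}" using S(2) assms(2) by auto
  define i where "i = Min S"
  have iS: "i \<in> S" unfolding i_def using fin Sne by (rule Min_in)
  have ile: "\<And>x. x \<in> S \<Longrightarrow> i \<le> x" unfolding i_def using fin by simp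
  have i: "i \<in> {1..n}" using iS S(1) by blast
  define T where "T = S - {i}"
  have cT: "card T = k - 1" unfolding T_def using iS fin S(2) by simp
  have Tgt: "\<And>r. r \<in> T \<Longrightarrow> i < r \<and> r \<in> S"
  proof -
    fix r assume r: "r \<in> T"
    then have "r \<in> S" "r \<noteq> i" unfolding T_def by auto
    moreover have "i \<le> r" using ile calculation(1) .
    ultimately show "i < r \<and> r \<in> S" by simp
  qed
  have sub: "T \<subseteq> {i+1..n}"
  proof
    fix r assume "r \<in> T"
    then have "i < r" "r \<in> S" using Tgt by auto
    then show "r \<in> {i+1..n}" using S(1) by auto
  qed
  have gt: "\<forall>r\<in>T. l i + 1 < \<sigma> r"
  proof
    fix r assume r: "r \<in> T"
    then have "i < r" "r \<in> S" using Tgt by auto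
    then have "\<sigma> i < \<sigma> r" using inc iS by blast
    moreover have "l i < \<sigma> i" using sig_gt i by simp
    ultimately show "l i + 1 < \<sigma> r" by simp
  qed
  have t: "l i + 1 \<le> n" using lbound[of i] i by simp
  have "card T + i \<le> n - (l i + 1) + card {r\<in>{1..i}. \<sigma> r \<le> l i + 1}"
    using cnt_bound[OF sig_perm _ t sub gt] i by simp
  then have "card T + i \<le> n - (l i + 1) + 1" using sig_C_le1[OF i] by simp
  then have "k + i + l i \<le> n + 1" using cT t assms(2) by simp
  then show ?thesis using i by blast
qed

lemma sig_lower:
  assumes i: "i \<in> {1..n}" and kb: "k + i + l i \<le> n + 1"
  shows "incs n \<sigma> k"
proof -
  have t: "l i + 1 \<le> n" using lbound[of i] i by simp
  obtain p where p: "p \<in> {1..i}" "\<sigma> p = l i + 1"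
  proof -
    have "(i, l i + 1) \<notin> Y" unfolding Y_def by simp
    then have nd: "(i, l i + 1) \<notin> diagram n \<sigma>" using sig_diag by simp
    have "l i < \<sigma> i" using sig_gt i by simp
    show ?thesis
    proof (cases "\<sigma> i = l i + 1")
      case True then show ?thesis using that[of i] i by simp
    next
      case False
      then have "l i + 1 < \<sigma> i" using \<open>l i < \<sigma> i\<close> by simp
      then have "\<not> (\<forall>k\<in>{1..i}. \<sigma> k \<noteq> l i + 1)" using nd diag_iff[OF sig_perm] i t by simp
      then show ?thesis using that by blast
    qed
  qed
  have C: "card {r\<in>{1..i}. \<sigma> r \<le> l i + 1} = 1"
  proof -
    have "p \<in> {r\<in>{1..i}. \<sigma> r \<le> l i + 1}" using p by simp
    moreover have "finite {r\<in>{1..i}. \<sigma> r \<le> l i + 1}" by simp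
    ultimately have "card {r\<in>{1..i}. \<sigma> r \<le> l i + 1} \<noteq> 0" using card_0_eq by blast
    then show ?thesis using sig_C_le1[OF i] by linarith
  qed
  define T where "T = {r\<in>{i+1..n}. l i + 1 < \<sigma> r}"
  have cT: "card T + i = n - (l i + 1) + 1" using cnt_lemma[OF sig_perm _ t] C i unfolding T_def by simp
  have finT: "finite T" unfolding T_def by simp
  have pT: "p \<notin> T" unfolding T_def using p by simp
  define S where "S = insert p T"
  have cS: "card S = card T + 1" unfolding S_def using finT pT by simp
  have sub: "S \<subseteq> {1..n}" unfolding S_def T_def using p i by auto
  have kS: "k \<le> card S" using cS cT kb t by linarith
  have inc: "\<forall>a\<in>S. \<forall>b\<in>S. a < b \<longrightarrow> \<sigma> a < \<sigma> b"
  proof (intro ballI impI)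
    fix a b assume a: "a \<in> S" and b: "b \<in> S" and ab: "a < b"
    have bnp: "b \<noteq> p"
    proof
      assume "b = p"
      then have "a \<in> T" using a ab unfolding S_def by auto
      then show False using ab \<open>b = p\<close> p unfolding T_def by simp
    qed
    then have bT: "b \<in> T" using b unfolding S_def by simp
    then have bb: "i < b" "b \<le> n" "l i + 1 < \<sigma> b" unfolding T_def by auto
    show "\<sigma> a < \<sigma> b"
    proof (cases "a = p")
      case True then show ?thesis using p bb by simp
    next
      case False
      then have aT: "a \<in> T" using a unfolding S_def by simp
      then have aa: "i < a" "a \<le> n" unfolding T_def by auto
      show ?thesis
      proof (rule ccontr)
        assume "\<not> \<sigma> a < \<sigma> b"
        moreover have "\<sigma> a \<noteq> \<sigma> b"
        proof
          assume "\<sigma> a = \<sigma> b"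
          then have "a = b" by (rule perm_inj[OF sig_perm])
          then show False using ab by simp
        qed
        ultimately have lt: "\<sigma> b < \<sigma> a" by simp
        have bn: "b \<in> {1..n}" using bb aa by simp
        have "\<forall>k\<in>{1..a}. \<sigma> k \<noteq> \<sigma> b"
        proof
          fix k assume k: "k \<in> {1..a}"
          show "\<sigma> k \<noteq> \<sigma> b"
          proof
            assume "\<sigma> k = \<sigma> b"
            then have "k = b" by (rule perm_inj[OF sig_perm])
            then show False using k ab by simp
          qed
        qed
        then have "(a, \<sigma> b) \<in> diagram n \<sigma>"
          using diag_iff[OF sig_perm] aa sig_range[OF bn] lt i by simp
        then have "\<sigma> b \<le> l a" using sig_diag unfolding Y_def by auto
        moreover have "l a \<le> l i" using l_anti[of i a] i aa by simp
        ultimately show False using bb by simp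
      qed
    qed
  qed
  show ?thesis using incs_of_set[OF sub kS inc] .
qed

end

theorem theorem3p1:
  fixes n k :: nat and \<pi> :: "nat \<Rightarrow> nat"
  assumes "\<pi> permutes {1..n}" and "schroeder n \<pi>" and "k \<ge> 1"
  shows "avoids n \<pi> (incr_pattern k) \<longleftrightarrow> avoids n (phi n \<pi>) (incr_pattern k)"
proof -
  interpret spm n \<pi> using assms(1,2) by (simp add: spm_def spm_axioms_def pm_def)
  interpret D: domc n lam using lam_mono lam_bound by (simp add: domc_def)
  define \<sigma>0 where "\<sigma>0 = dom_perm n lam"
  have ess_eq: "essential_set n \<sigma>0 = essential_star n \<pi>"
  proof (intro set_eqI)
    fix x :: "nat \<times> nat"
    obtain a b where x: "x = (a,b)" by (cases x)
    show "x \<in> essential_set n \<sigma>0 \<longleftrightarrow> x \<in> essential_star n \<pi>"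
      unfolding x \<sigma>0_def D.sig_ess corner_iff ..
  qed
  have r0: "\<forall>e\<in>essential_set n \<sigma>0. rank \<sigma>0 e = 0" unfolding \<sigma>0_def using D.sig_rank0 by auto
  have p0: "\<sigma>0 permutes {1..n}" unfolding \<sigma>0_def by (rule D.sig_perm)
  have phi_eq: "phi n \<pi> = \<sigma>0"
    unfolding phi_def
  proof (rule the_equality)
    show "\<sigma>0 permutes {1..n} \<and> essential_set n \<sigma>0 = essential_star n \<pi> \<and> (\<forall>e\<in>essential_set n \<sigma>0. rank \<sigma>0 e = 0)"
      using p0 ess_eq r0 by simp
  next
    fix \<sigma> assume a: "\<sigma> permutes {1..n} \<and> essential_set n \<sigma> = essential_star n \<pi> \<and> (\<forall>e\<in>essential_set n \<sigma>. rank \<sigma> e = 0)"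
    show "\<sigma> = \<sigma>0" using unique_dom[OF _ p0 _ _ r0] a ess_eq by simp
  qed
  have Ml: "\<And>i. i \<in> {1..n} \<Longrightarrow> M i = lam i + 1" unfolding lam_def using M_pos by fastforce
  have A: "incs n \<pi> k \<longleftrightarrow> (\<exists>i\<in>{1..n}. k + i + M i \<le> n + 2)"
    using pi_upper pi_lower assms(3) by blast
  have B: "incs n \<sigma>0 k \<longleftrightarrow> (\<exists>i\<in>{1..n}. k + i + lam i \<le> n + 1)"
    unfolding \<sigma>0_def using D.sig_upper D.sig_lower assms(3) by blast
  have C: "(\<exists>i\<in>{1..n}. k + i + M i \<le> n + 2) \<longleftrightarrow> (\<exists>i\<in>{1..n}. k + i + lam i \<le> n + 1)"
    using Ml by auto
  show ?thesis unfolding avoids_def contains_incr_iff phi_eq using A B C by simp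
qed


end
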